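(* Let $C\ge 2$ and $N\ge 1$ be integers and let $\boldsymbol{h}_{i,c}\in\mathbb{R}^p$ ($1\le i\le N$, $1\le c\le C$) be fixed (not trained) feature vectors, $\boldsymbol{h}_{i,c}$ being the $i$-th example of class $c$. Define the class-means $\boldsymbol{\mu}_c=\frac1N\sum_{i}\boldsymbol{h}_{i,c}$, the global mean $\boldsymbol{\mu}_G=\frac{1}{NC}\sum_{i,c}\boldsymbol{h}_{i,c}$, the total covariance $\boldsymbol{\Sigma}_T=\frac{1}{NC}\sum_{i,c}(\boldsymbol{h}_{i,c}-\boldsymbol{\mu}_G)(\boldsymbol{h}_{i,c}-\boldsymbol{\mu}_G)^\top$, the within-class covariance $\boldsymbol{\Sigma}_W=\frac{1}{NC}\sum_{i,c}(\boldsymbol{h}_{i,c}-\boldsymbol{\mu}_c)(\boldsymbol{h}_{i,c}-\boldsymbol{\mu}_c)^\top$, and the matrix $\dot{\boldsymbol{M}}=[\boldsymbol{\mu}_1-\boldsymbol{\mu}_G,\dots,\boldsymbol{\mu}_C-\boldsymbol{\mu}_G]\in\mathbb{R}^{p\times C}$. Consider the (Webb–Lowe) linear classifier with weights $\boldsymbol{W}\in\mathbb{R}^{C\times p}$ (rows $\boldsymbol{w}_c^\top$) and biases $\boldsymbol{b}=(b_c)\in\mathbb{R}^C$ given by $$\boldsymbol{W}=\tfrac1C\dot{\boldsymbol{M}}^\top\boldsymbol{\Sigma}_T^\dagger,\qquad \boldsymbol{b}=\tfrac1C\mathbf{1}_C-\tfrac1C\dot{\boldsymbol{M}}^\top\boldsymbol{\Sigma}_T^\dagger\boldsymbol{\mu}_G,$$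 where $\dagger$ is the Moore–Penrose pseudoinverse and $\mathbf{1}_C$ the all-ones vector. Assume (i) $\boldsymbol{\Sigma}_W=\mathbf{0}$, and (ii) $\boldsymbol{\mu}_c\neq\boldsymbol{\mu}_G$ for all $c$, $\|\boldsymbol{\mu}_c-\boldsymbol{\mu}_G\|_2=\|\boldsymbol{\mu}_{c'}-\boldsymbol{\mu}_G\|_2$ for all $c,c'$, and, with $\tilde{\boldsymbol{\mu}}_c=(\boldsymbol{\mu}_c-\boldsymbol{\mu}_G)/\|\boldsymbol{\mu}_c-\boldsymbol{\mu}_G\|_2$, $\langle\tilde{\boldsymbol{\mu}}_c,\tilde{\boldsymbol{\mu}}_{c'}\rangle=\frac{C}{C-1}\delta_{c,c'}-\frac{1}{C-1}$ for all $c,c'$. Then (a) $\dfrac{\boldsymbol{W}^\top}{\|\boldsymbol{W}\|_F}=\dfrac{\dot{\boldsymbol{M}}}{\|\dot{\boldsymbol{M}}\|_F}$, and (b) for every $\boldsymbol{h}\in\mathbb{R}^p$, $\arg\max_{c'}\left(\langle\boldsymbol{w}_{c'},\boldsymbol{h}\rangle+b_{c'}\right)=\arg\min_{c'}\|\boldsymbol{h}-\boldsymbol{\mu}_{c'}\|_2$.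
   Context: $\delta_{c,c'}$ is the Kronecker delta and $\|\cdot\|_F$ the Frobenius norm. The classifier above is (by a result of Webb and Lowe) the optimal linear classifier under mean-squared-error loss when the features are fixed; in the claim it is simply the classifier defined by the displayed formulas. The predicted label of a feature $\boldsymbol{h}$ is the index maximizing $\langle\boldsymbol{w}_c,\boldsymbol{h}\rangle+b_c$. *)

theory Defs
  imports "HOL-Analysis.Analysis"
begin

text \<open>Features h i c in R^p: i ranges over the finite type 'n (N = CARD('n) examples),
  c ranges over the finite type 'c (C = CARD('c) classes), p = CARD('p).\<close>

definition outer :: "real^'p \<Rightarrow> real^'p \<Rightarrow> real^'p^'p" where
  "outer u v = (\<chi> i j. u $ i * v $ j)"

definition frob_norm :: "real^'a^'b \<Rightarrow> real" where
  "frob_norm A = sqrt (\<Sum>i\<in>UNIV. \<Sum>j\<in>UNIV. (A $ i $ j)^2)"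

definition pinv :: "real^'n^'m \<Rightarrow> real^'m^'n" where
  "pinv A = (THE X. A ** X ** A = A \<and> X ** A ** X = X \<and>
                    transpose (A ** X) = A ** X \<and> transpose (X ** A) = X ** A)"

definition class_mean :: "('n::finite \<Rightarrow> 'c \<Rightarrow> real^'p) \<Rightarrow> 'c \<Rightarrow> real^'p" where
  "class_mean h c = (1 / real CARD('n)) *\<^sub>R (\<Sum>i\<in>UNIV. h i c)"

definition global_mean :: "('n::finite \<Rightarrow> 'c::finite \<Rightarrow> real^'p) \<Rightarrow> real^'p" where
  "global_mean h = (1 / (real CARD('n) * real CARD('c))) *\<^sub>R (\<Sum>i\<in>UNIV. \<Sum>c\<in>UNIV. h i c)"

definition total_cov :: "('n::finite \<Rightarrow> 'c::finite \<Rightarrow> real^'p) \<Rightarrow> real^'p^'p" where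
  "total_cov h = (1 / (real CARD('n) * real CARD('c))) *\<^sub>R
     (\<Sum>i\<in>UNIV. \<Sum>c\<in>UNIV. outer (h i c - global_mean h) (h i c - global_mean h))"

definition within_cov :: "('n::finite \<Rightarrow> 'c::finite \<Rightarrow> real^'p) \<Rightarrow> real^'p^'p" where
  "within_cov h = (1 / (real CARD('n) * real CARD('c))) *\<^sub>R
     (\<Sum>i\<in>UNIV. \<Sum>c\<in>UNIV. outer (h i c - class_mean h c) (h i c - class_mean h c))"

definition Mdot :: "('n::finite \<Rightarrow> 'c::finite \<Rightarrow> real^'p) \<Rightarrow> real^'c^'p" where
  "Mdot h = (\<chi> k c. (class_mean h c - global_mean h) $ k)"

definition WL_W :: "('n::finite \<Rightarrow> 'c::finite \<Rightarrow> real^'p) \<Rightarrow> real^'p^'c" where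
  "WL_W h = (1 / real CARD('c)) *\<^sub>R (transpose (Mdot h) ** pinv (total_cov h))"

definition WL_b :: "('n::finite \<Rightarrow> 'c::finite \<Rightarrow> real^'p) \<Rightarrow> real^'c" where
  "WL_b h = (1 / real CARD('c)) *\<^sub>R (\<chi> c. 1)
          - (1 / real CARD('c)) *\<^sub>R ((transpose (Mdot h) ** pinv (total_cov h)) *v global_mean h)"

end

theory Submission
  imports Defs
begin

lemma pinv_left:
  fixes A :: "real^'n^'m" and X Y :: "real^'m^'n"
  assumes "A ** X ** A = A" "X ** A ** X = X" "transpose (A ** X) = A ** X" "transpose (X ** A) = X ** A"
   and "A ** Y ** A = A" "Y ** A ** Y = Y" "transpose (A ** Y) = A ** Y" "transpose (Y ** A) = Y ** A"
  shows "X = X ** A ** Y"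
proof -
  have tA: "transpose A = transpose A ** (A ** Y)"
    by (metis assms(5,7) matrix_transpose_mul)
  have "X = X ** (A ** X)" using assms(2) by (simp add: matrix_mul_assoc)
  also have "\<dots> = X ** (transpose X ** transpose A)" by (metis assms(3) matrix_transpose_mul)
  also have "\<dots> = X ** (transpose X ** (transpose A ** (A ** Y)))" using tA by simp
  also have "\<dots> = X ** (transpose (A ** X)) ** A ** Y" by (simp add: matrix_mul_assoc matrix_transpose_mul)
  also have "\<dots> = X ** A ** Y" using assms(2,3) by (simp add: matrix_mul_assoc)
  finally show ?thesis .
qed

lemma pinv_right:
  fixes A :: "real^'n^'m" and X Y :: "real^'m^'n"
  assumes "A ** X ** A = A" "X ** A ** X = X" "transpose (A ** X) = A ** X" "transpose (X ** A) = X ** A"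
   and "A ** Y ** A = A" "Y ** A ** Y = Y" "transpose (A ** Y) = A ** Y" "transpose (Y ** A) = Y ** A"
  shows "Y = X ** A ** Y"
proof -
  have "transpose A = transpose (A ** (X ** A))" using assms(1) by (simp only: matrix_mul_assoc)
  also have "\<dots> = transpose (X ** A) ** transpose A" by (rule matrix_transpose_mul)
  also have "\<dots> = (X ** A) ** transpose A" by (simp only: assms(4))
  finally have tA: "transpose A = (X ** A) ** transpose A" .
  have "Y = transpose (Y ** A) ** Y" using assms(6,8) by simp
  also have "\<dots> = (transpose A ** transpose Y) ** Y" by (simp only: matrix_transpose_mul)
  also have "\<dots> = (((X ** A) ** transpose A) ** transpose Y) ** Y" by (simp only: tA[symmetric])
  also have "\<dots> = (X ** A) ** (transpose A ** transpose Y) ** Y" by (simp only: matrix_mul_assoc)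
  also have "\<dots> = (X ** A) ** transpose (Y ** A) ** Y" by (simp only: matrix_transpose_mul)
  also have "\<dots> = (X ** A) ** (Y ** A ** Y)" by (simp only: assms(8) matrix_mul_assoc)
  also have "\<dots> = X ** A ** Y" by (simp only: assms(6))
  finally show ?thesis .
qed

lemma pinv_eq:
  fixes A :: "real^'n^'m" and X :: "real^'m^'n"
  assumes "A ** X ** A = A" "X ** A ** X = X" "transpose (A ** X) = A ** X" "transpose (X ** A) = X ** A"
  shows "pinv A = X"
  unfolding pinv_def
proof (rule the_equality)
  show "A ** X ** A = A \<and> X ** A ** X = X \<and> transpose (A ** X) = A ** X \<and> transpose (X ** A) = X ** A"
    using assms by blast
  fix Y assume "A ** Y ** A = A \<and> Y ** A ** Y = Y \<and> transpose (A ** Y) = A ** Y \<and> transpose (Y ** A) = Y ** A"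
  then show "Y = X" using pinv_left[OF assms] pinv_right[OF assms] by metis
qed

lemma matrix_diff_ldistrib: "(A::real^'n^'m) ** (B - C) = A ** B - A ** C"
  by (simp add: matrix_matrix_mult_def vec_eq_iff sum_subtractf right_diff_distrib)
lemma matrix_diff_rdistrib: "((B::real^'n^'m) - C) ** A = B ** A - C ** A"
  by (simp add: matrix_matrix_mult_def vec_eq_iff sum_subtractf left_diff_distrib)

lemma frob_scale: "frob_norm (k *\<^sub>R (A::real^'a^'b)) = \<bar>k\<bar> * frob_norm A"
  unfolding frob_norm_def
  by (simp add: power_mult_distrib sum_distrib_left[symmetric] real_sqrt_mult)

lemma frob_transpose: "frob_norm (transpose (A::real^'a^'b)) = frob_norm A"
proof -
  have "(\<Sum>i\<in>UNIV. \<Sum>j\<in>UNIV. (transpose A $ i $ j)^2) = (\<Sum>i\<in>UNIV. \<Sum>j\<in>UNIV. (A $ j $ i)^2)"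
    by (simp add: transpose_def)
  also have "\<dots> = (\<Sum>j\<in>UNIV. \<Sum>i\<in>UNIV. (A $ j $ i)^2)" by (rule sum.swap)
  finally show ?thesis unfolding frob_norm_def by simp
qed


lemma scaleR_mm: "((a::real) *\<^sub>R (P::real^'n^'m)) ** (b *\<^sub>R (Q::real^'k^'n)) = (a*b) *\<^sub>R (P ** Q)"
  by (simp add: matrix_scalar_ac scalar_matrix_assoc[symmetric])

theorem theorem2:
  fixes h :: "'n::finite \<Rightarrow> 'c::finite \<Rightarrow> real^'p"
  assumes C2: "CARD('c) \<ge> 2"
    and NC1: "within_cov h = 0"
    and NC2_ne: "\<forall>c. class_mean h c \<noteq> global_mean h"
    and NC2_eqnorm: "\<forall>c c'. norm (class_mean h c - global_mean h) = norm (class_mean h c' - global_mean h)"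
    and NC2_simplex: "\<forall>c c'.
      ((1 / norm (class_mean h c - global_mean h)) *\<^sub>R (class_mean h c - global_mean h)) \<bullet>
      ((1 / norm (class_mean h c' - global_mean h)) *\<^sub>R (class_mean h c' - global_mean h))
      = real CARD('c) / (real CARD('c) - 1) * (if c = c' then 1 else 0) - 1 / (real CARD('c) - 1)"
  shows "(1 / frob_norm (WL_W h)) *\<^sub>R transpose (WL_W h) = (1 / frob_norm (Mdot h)) *\<^sub>R Mdot h
     \<and> (\<forall>x :: real^'p.
          {c. \<forall>c'. (WL_W h $ c') \<bullet> x + WL_b h $ c' \<le> (WL_W h $ c) \<bullet> x + WL_b h $ c}
        = {c. \<forall>c'. norm (x - class_mean h c) \<le> norm (x - class_mean h c')})"
proof -
  define N where "N = real CARD('n)"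
  define C where "C = real CARD('c)"
  define mu where "mu = class_mean h"
  define g where "g = global_mean h"
  define m where "m = (\<lambda>c. mu c - g)"
  define M where "M = Mdot h"
  have Npos: "N > 0" unfolding N_def by simp
  have C1: "C > 1" unfolding C_def using C2 by simp
  have hic: "h i c = mu c" for i c
  proof -
    have "((h i c - mu c) $ k)^2 = 0" for k
    proof -
      have "within_cov h $ k $ k = (1 / (N * C)) * (\<Sum>i\<in>UNIV. \<Sum>c\<in>UNIV. ((h i c - mu c) $ k)^2)"
        unfolding within_cov_def N_def C_def mu_def outer_def
        by (simp add: sum_component power2_eq_square)
      then have "(\<Sum>i\<in>UNIV. \<Sum>c\<in>UNIV. ((h i c - mu c) $ k)^2) = 0"
        using NC1 Npos C1 by simp
      then have "\<forall>i\<in>UNIV. (\<Sum>c\<in>UNIV. ((h i c - mu c) $ k)^2) = 0"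
        by (subst (asm) sum_nonneg_eq_0_iff) (auto intro: sum_nonneg)
      then show ?thesis
        by (subst (asm) sum_nonneg_eq_0_iff) auto
    qed
    then show ?thesis by (simp add: vec_eq_iff)
  qed
  have g_eq: "g = (1 / C) *\<^sub>R (\<Sum>c\<in>UNIV. mu c)"
  proof -
    have "(\<Sum>c\<in>UNIV. mu c) = (1 / N) *\<^sub>R (\<Sum>c\<in>UNIV. \<Sum>i\<in>UNIV. h i c)"
      unfolding mu_def class_mean_def N_def by (simp add: scaleR_sum_right)
    also have "(\<Sum>c\<in>UNIV. \<Sum>i\<in>UNIV. h i c) = (\<Sum>i\<in>UNIV. \<Sum>c\<in>UNIV. h i c)"
      by (rule sum.swap)
    finally show ?thesis unfolding g_def global_mean_def N_def C_def by (simp add: mult.commute)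
  qed
  have sum_m: "(\<Sum>c\<in>UNIV. m c) = 0"
    unfolding m_def using C1 by (simp add: sum_subtractf sum_constant_scaleR g_eq C_def del: sum_constant)
  define r where "r = norm (m undefined)"
  have e: "class_mean h c - global_mean h = m c" for c by (simp add: m_def mu_def g_def)
  have norm_m: "norm (m c) = r" for c
    using NC2_eqnorm unfolding e r_def by blast
  have rpos: "r > 0"
  proof -
    have "m undefined \<noteq> 0" using NC2_ne unfolding m_def mu_def g_def by simp
    then show ?thesis unfolding r_def by simp
  qed
  define \<alpha> where "\<alpha> = r^2 * C / (C - 1)"
  define \<gamma> where "\<gamma> = r^2 / (C - 1)"
  have apos: "\<alpha> > 0" unfolding \<alpha>_def using rpos C1 by simp
  have s0: "\<forall>c c'. ((1 / r) *\<^sub>R m c) \<bullet> ((1 / r) *\<^sub>R m c') = C / (C - 1) * (if c = c' then 1 else 0) - 1 / (C - 1)"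
    using NC2_simplex unfolding e norm_m C_def .
  have inner_m: "m c \<bullet> m c' = \<alpha> * (if c = c' then 1 else 0) - \<gamma>" for c c'
  proof -
    have "(1/r) * (1/r) * (m c \<bullet> m c') = C / (C - 1) * (if c = c' then 1 else 0) - 1 / (C - 1)"
      using s0 by simp
    moreover have "m c \<bullet> m c' = (r*r) * ((1/r) * (1/r) * (m c \<bullet> m c'))" using rpos by simp
    ultimately have "m c \<bullet> m c' = (r*r) * (C / (C - 1) * (if c = c' then 1 else 0) - 1 / (C - 1))"
      by simp
    then show ?thesis unfolding \<alpha>_def \<gamma>_def
      by (cases "c = c'") (simp_all add: power2_eq_square right_diff_distrib)
  qed
  have Mc: "M $ k $ c = m c $ k" for k c
    unfolding M_def Mdot_def m_def mu_def g_def by simp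
  define J :: "real^'c^'c" where "J = (\<chi> i j. 1)"
  define A where "A = M ** transpose M"
  have T: "transpose M ** M = \<alpha> *\<^sub>R mat 1 - \<gamma> *\<^sub>R J"
    by (simp add: vec_eq_iff matrix_matrix_mult_def transpose_def Mc inner_m[symmetric] inner_vec_def J_def mat_def)
  have MJ: "M ** J = 0"
  proof -
    have "(\<Sum>c\<in>UNIV. m c $ k) = 0" for k using sum_m by (metis sum_component zero_index)
    then show ?thesis by (simp add: vec_eq_iff matrix_matrix_mult_def J_def Mc)
  qed
  have tJ: "transpose J = J" by (simp add: J_def transpose_def)
  have JM: "J ** transpose M = 0"
  proof -
    have "J ** transpose M = transpose (M ** J)" by (simp add: matrix_transpose_mul tJ)
    then show ?thesis using MJ by (simp add: transpose_def vec_eq_iff)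
  qed
  have tA: "transpose A = A" unfolding A_def by (simp add: matrix_transpose_mul)
  have AA: "A ** A = \<alpha> *\<^sub>R A"
  proof -
    have "A ** A = M ** (transpose M ** M) ** transpose M" unfolding A_def by (simp add: matrix_mul_assoc)
    also have "\<dots> = \<alpha> *\<^sub>R A - \<gamma> *\<^sub>R (M ** J ** transpose M)"
      unfolding T A_def by (simp add: matrix_diff_ldistrib matrix_diff_rdistrib matrix_scalar_ac scalar_matrix_assoc[symmetric])
    also have "\<dots> = \<alpha> *\<^sub>R A" using MJ by simp
    finally show ?thesis .
  qed
  have TC: "total_cov h = (1 / C) *\<^sub>R A"
  proof -
    have "total_cov h = (1 / (N * C)) *\<^sub>R (\<Sum>i\<in>(UNIV::'n set). \<Sum>c\<in>UNIV. outer (m c) (m c))"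
      unfolding total_cov_def N_def C_def m_def g_def hic by simp
    also have "\<dots> = (1 / C) *\<^sub>R (\<Sum>c\<in>UNIV. outer (m c) (m c))"
      using Npos by (simp add: N_def sum_constant_scaleR del: sum_constant)
    also have "(\<Sum>c\<in>UNIV. outer (m c) (m c)) = A"
      by (simp add: vec_eq_iff A_def outer_def sum_component matrix_matrix_mult_def transpose_def Mc)
    finally show ?thesis .
  qed
  have AAA: "A ** A ** A = (\<alpha> * \<alpha>) *\<^sub>R A"
    using AA by (simp add: scalar_matrix_assoc[symmetric])
  have PI: "pinv (total_cov h) = (C / \<alpha>^2) *\<^sub>R A"
    unfolding TC
  proof (rule pinv_eq)
    show "(1 / C) *\<^sub>R A ** (C / \<alpha>\<^sup>2) *\<^sub>R A ** (1 / C) *\<^sub>R A = (1 / C) *\<^sub>R A"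
      using AAA apos C1 by (simp add: scaleR_mm power2_eq_square)
    show "(C / \<alpha>\<^sup>2) *\<^sub>R A ** (1 / C) *\<^sub>R A ** (C / \<alpha>\<^sup>2) *\<^sub>R A = (C / \<alpha>\<^sup>2) *\<^sub>R A"
      using AAA apos C1 by (simp add: scaleR_mm power2_eq_square)
    show "transpose ((1 / C) *\<^sub>R A ** (C / \<alpha>\<^sup>2) *\<^sub>R A) = (1 / C) *\<^sub>R A ** (C / \<alpha>\<^sup>2) *\<^sub>R A"
      using AA by (simp add: scaleR_mm transpose_scalar tA)
    show "transpose ((C / \<alpha>\<^sup>2) *\<^sub>R A ** (1 / C) *\<^sub>R A) = (C / \<alpha>\<^sup>2) *\<^sub>R A ** (1 / C) *\<^sub>R A"
      using AA by (simp add: scaleR_mm transpose_scalar tA)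
  qed
  have Q: "transpose M ** pinv (total_cov h) = (C / \<alpha>) *\<^sub>R transpose M"
  proof -
    have "transpose M ** pinv (total_cov h) = (C / \<alpha>^2) *\<^sub>R ((transpose M ** M) ** transpose M)"
      unfolding PI A_def by (simp add: matrix_scalar_ac matrix_mul_assoc scalar_matrix_assoc[symmetric])
    also have "\<dots> = (C / \<alpha>^2) *\<^sub>R (\<alpha> *\<^sub>R transpose M)"
      unfolding T using JM by (simp add: matrix_diff_rdistrib scalar_matrix_assoc[symmetric])
    also have "\<dots> = (C / \<alpha>) *\<^sub>R transpose M" using apos by (simp add: power2_eq_square)
    finally show ?thesis .
  qed
  have W: "WL_W h = (1 / \<alpha>) *\<^sub>R transpose M"
    unfolding WL_W_def M_def[symmetric] Q C_def[symmetric] using C1 by simp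
  have b: "WL_b h = (1 / C) *\<^sub>R (\<chi> c. 1) - (1 / \<alpha>) *\<^sub>R (g v* M)"
    unfolding WL_b_def M_def[symmetric] Q C_def[symmetric] g_def[symmetric] using C1
    by (simp add: scaleR_matrix_vector_assoc[symmetric])
  have partA: "(1 / frob_norm (WL_W h)) *\<^sub>R transpose (WL_W h) = (1 / frob_norm (Mdot h)) *\<^sub>R Mdot h"
  proof -
    have tW: "transpose (WL_W h) = (1 / \<alpha>) *\<^sub>R M" unfolding W by (simp add: transpose_scalar)
    have fW: "frob_norm (WL_W h) = (1 / \<alpha>) * frob_norm M"
      unfolding W using apos by (simp add: frob_scale frob_transpose)
    have co: "1 / ((1 / \<alpha>) * frob_norm M) * (1 / \<alpha>) = 1 / frob_norm M"
    proof (cases "frob_norm M = 0")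
      case True then show ?thesis by simp
    next
      case False then show ?thesis using apos by (simp add: field_simps)
    qed
    show ?thesis unfolding tW fW M_def[symmetric] scaleR_scaleR co ..
  qed
  have Wc: "WL_W h $ c = (1 / \<alpha>) *\<^sub>R m c" for c
    unfolding W by (simp add: vec_eq_iff transpose_def Mc)
  have bc: "WL_b h $ c = 1 / C - (1 / \<alpha>) * (m c \<bullet> g)" for c
    unfolding b by (simp add: vector_matrix_mult_def Mc inner_vec_def mult.commute)
  have score: "(WL_W h $ c) \<bullet> x + WL_b h $ c = (1 / \<alpha>) * (m c \<bullet> (x - g)) + 1 / C" for c x
    unfolding Wc bc by (simp add: inner_diff_right algebra_simps)
  have dist: "norm (x - mu c)^2 = norm (x - g)^2 - 2 * (m c \<bullet> (x - g)) + r^2" for c x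
  proof -
    have "x - mu c = (x - g) - m c" unfolding m_def by simp
    have gen: "norm (y - z)^2 = norm y^2 - 2 * (z \<bullet> y) + norm z^2" for y z :: "real^'p"
      by (simp add: power2_norm_eq_inner inner_diff_left inner_diff_right inner_commute)
    show ?thesis unfolding \<open>x - mu c = (x - g) - m c\<close> gen norm_m ..

  qed
  have sq: "(a::real) \<ge> 0 \<Longrightarrow> b \<ge> 0 \<Longrightarrow> a \<le> b \<longleftrightarrow> a^2 \<le> b^2" for a b
    using abs_le_square_iff[of a b] by simp
  have ia: "0 < 1 / \<alpha>" using apos by simp
  have canc: "(1 / \<alpha>) * a + 1 / C \<le> (1 / \<alpha>) * b + 1 / C \<longleftrightarrow> a \<le> b" for a b
    by (simp only: add_le_cancel_right mult_le_cancel_left_pos[OF ia])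
  have key: "(WL_W h $ c') \<bullet> x + WL_b h $ c' \<le> (WL_W h $ c) \<bullet> x + WL_b h $ c
      \<longleftrightarrow> norm (x - class_mean h c) \<le> norm (x - class_mean h c')" for c c' x
  proof -
    have "(WL_W h $ c') \<bullet> x + WL_b h $ c' \<le> (WL_W h $ c) \<bullet> x + WL_b h $ c
       \<longleftrightarrow> m c' \<bullet> (x - g) \<le> m c \<bullet> (x - g)"
      unfolding score by (rule canc)
    also have "\<dots> \<longleftrightarrow> norm (x - mu c)^2 \<le> norm (x - mu c')^2"
      unfolding dist by linarith
    also have "\<dots> \<longleftrightarrow> norm (x - mu c) \<le> norm (x - mu c')"
      by (rule sq[symmetric]) simp_all
    finally show ?thesis unfolding mu_def .
  qed
  show ?thesis
  proof (intro conjI allI)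
    show "(1 / frob_norm (WL_W h)) *\<^sub>R transpose (WL_W h) = (1 / frob_norm (Mdot h)) *\<^sub>R Mdot h"
      by (rule partA)
  next
    fix x :: "real^'p"
    show "{c. \<forall>c'. (WL_W h $ c') \<bullet> x + WL_b h $ c' \<le> (WL_W h $ c) \<bullet> x + WL_b h $ c}
        = {c. \<forall>c'. norm (x - class_mean h c) \<le> norm (x - class_mean h c')}"
    proof (rule set_eqI)
      fix c
      have "(\<forall>c'. (WL_W h $ c') \<bullet> x + WL_b h $ c' \<le> (WL_W h $ c) \<bullet> x + WL_b h $ c)
          \<longleftrightarrow> (\<forall>c'. norm (x - class_mean h c) \<le> norm (x - class_mean h c'))"
        by (rule all_cong1) (rule key)
      then show "c \<in> {c. \<forall>c'. (WL_W h $ c') \<bullet> x + WL_b h $ c' \<le> (WL_W h $ c) \<bullet> x + WL_b h $ c}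
          \<longleftrightarrow> c \<in> {c. \<forall>c'. norm (x - class_mean h c) \<le> norm (x - class_mean h c')}"
        unfolding mem_Collect_eq .
    qed
  qed
qed

end
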